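(* Let $\sigma=\{\sigma_z\}_{z\in\mathbb{Z}}$ be i.i.d. strictly positive random variables with law $\mathbf{P}$, with $L(x):=1/\mathbf{P}(\sigma_0>x)$ slowly varying at infinity (i.e. $\lim_{u\to\infty}L(uv)/L(u)=1$ for every $v>0$). Let $h_t$ be any function with $h_t\to\infty$, $h_t^2=o(r_t)$, and such that, for all sufficiently large $t$, \[ L(\ell_t/h_t^3)>L(\ell_t)(1-1/h_t)\quad\text{and}\quad L(\ell_th_t^3)<L(\ell_t)(1+1/h_t).\] Then $\mathbf{P}(\mathcal{C}^h_t)\to1$ as $t\to\infty$, where $\mathcal{C}^h_t:=\{\bar S_t<\ell_t/h_t\}$.
   Context: $\ell_t:=\min\{s\ge0: sL(s)\ge t\}$, $r_t:=L(\ell_t)$, $Z^{(1)}_t:=\min\{z\in\mathbb{Z}^+:\sigma_z>\ell_t\}$, $Z^{(2)}_t:=\max\{z\in\mathbb{Z}^-:\sigma_z>\ell_t\}$ (with $\mathbb{Z}^+$ the positive and $\mathbb{Z}^-$ the non-positive integers), and $\bar S_t:=\sum_{i=1,2}\ \sum_{z\in\mathbb{Z}:\,1\le|z-Z^{(i)}_t|<r_t/h_t}\sigma_z$. *)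

theory Defs
  imports "HOL-Probability.Probability" "HOL-Library.Landau_Symbols"
begin

definition tailL :: "'a measure \<Rightarrow> (int \<Rightarrow> 'a \<Rightarrow> real) \<Rightarrow> real \<Rightarrow> real" where
  "tailL M \<sigma> x = 1 / measure M {\<omega> \<in> space M. \<sigma> 0 \<omega> > x}"

definition ellt :: "'a measure \<Rightarrow> (int \<Rightarrow> 'a \<Rightarrow> real) \<Rightarrow> real \<Rightarrow> real" where
  "ellt M \<sigma> t = Inf {s. 0 \<le> s \<and> s * tailL M \<sigma> s \<ge> t}"

definition rt :: "'a measure \<Rightarrow> (int \<Rightarrow> 'a \<Rightarrow> real) \<Rightarrow> real \<Rightarrow> real" where
  "rt M \<sigma> t = tailL M \<sigma> (ellt M \<sigma> t)"

definition Z1 :: "'a measure \<Rightarrow> (int \<Rightarrow> 'a \<Rightarrow> real) \<Rightarrow> real \<Rightarrow> 'a \<Rightarrow> int" where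
  "Z1 M \<sigma> t \<omega> = Inf {z::int. 0 < z \<and> \<sigma> z \<omega> > ellt M \<sigma> t}"

definition Z2 :: "'a measure \<Rightarrow> (int \<Rightarrow> 'a \<Rightarrow> real) \<Rightarrow> real \<Rightarrow> 'a \<Rightarrow> int" where
  "Z2 M \<sigma> t \<omega> = Sup {z::int. z \<le> 0 \<and> \<sigma> z \<omega> > ellt M \<sigma> t}"

definition Sbar :: "'a measure \<Rightarrow> (int \<Rightarrow> 'a \<Rightarrow> real) \<Rightarrow> (real \<Rightarrow> real) \<Rightarrow> real \<Rightarrow> 'a \<Rightarrow> real" where
  "Sbar M \<sigma> h t \<omega> =
     (\<Sum>z\<in>{z::int. 1 \<le> \<bar>z - Z1 M \<sigma> t \<omega>\<bar> \<and> real_of_int \<bar>z - Z1 M \<sigma> t \<omega>\<bar> < rt M \<sigma> t / h t}. \<sigma> z \<omega>)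
   + (\<Sum>z\<in>{z::int. 1 \<le> \<bar>z - Z2 M \<sigma> t \<omega>\<bar> \<and> real_of_int \<bar>z - Z2 M \<sigma> t \<omega>\<bar> < rt M \<sigma> t / h t}. \<sigma> z \<omega>)"

end

theory Submission
  imports Defs
begin


locale iidsetup = prob_space M for M :: "'a measure" +
  fixes \<sigma> :: "int \<Rightarrow> 'a \<Rightarrow> real"
  assumes meas[measurable]: "\<And>z. \<sigma> z \<in> borel_measurable M"
    and ind: "indep_vars (\<lambda>_. borel) \<sigma> UNIV"
    and idd: "\<And>z. distr M borel (\<sigma> z) = distr M borel (\<sigma> 0)"
begin

definition P0 :: "real set \<Rightarrow> real" where
  "P0 B = prob {\<omega>\<in>space M. \<sigma> 0 \<omega> \<in> B}"

lemma prob_z: "B \<in> sets borel \<Longrightarrow> prob {\<omega>\<in>space M. \<sigma> z \<omega> \<in> B} = P0 B"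
proof -
  assume B: "B \<in> sets borel"
  have "prob {\<omega>\<in>space M. \<sigma> z \<omega> \<in> B} = measure (distr M borel (\<sigma> z)) B"
    using B by (subst measure_distr) (auto simp: vimage_def Int_def conj_commute)
  also have "\<dots> = measure (distr M borel (\<sigma> 0)) B" by (subst idd[of z]) (rule refl)
  also have "\<dots> = P0 B"
    using B unfolding P0_def by (subst measure_distr) (auto simp: vimage_def Int_def conj_commute)
  finally show ?thesis .
qed

lemma prod_prob:
  assumes "finite J" "J \<noteq> {}" "\<And>j. j \<in> J \<Longrightarrow> B j \<in> sets borel"
  shows "prob (\<Inter>j\<in>J. {\<omega>\<in>space M. \<sigma> j \<omega> \<in> B j}) = (\<Prod>j\<in>J. P0 (B j))"
proof -
  have i: "indep_sets (\<lambda>i. { \<sigma> i -` A \<inter> space M | A. A \<in> sets borel}) UNIV"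
    using ind unfolding indep_vars_def2 by simp
  have "prob (\<Inter>j\<in>J. \<sigma> j -` B j \<inter> space M) = (\<Prod>j\<in>J. prob (\<sigma> j -` B j \<inter> space M))"
    using assms by (intro indep_setsD[OF i]) auto
  moreover have "\<And>j. \<sigma> j -` B j \<inter> space M = {\<omega>\<in>space M. \<sigma> j \<omega> \<in> B j}" by auto
  ultimately show ?thesis using assms prob_z by simp
qed

lemma sev: "B \<in> sets borel \<Longrightarrow> {\<omega>\<in>space M. \<sigma> z \<omega> \<in> B} \<in> events"
proof -
  assume "B \<in> sets borel"
  from measurable_sets[OF meas this, of z] show ?thesis by (simp add: vimage_def Int_def conj_commute)
qed

lemma P0_nonneg: "0 \<le> P0 B" unfolding P0_def by simp
lemma P0_le1: "P0 B \<le> 1" unfolding P0_def by simp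
lemma P0_mono: "B \<subseteq> B' \<Longrightarrow> B' \<in> sets borel \<Longrightarrow> P0 B \<le> P0 B'"
  unfolding P0_def by (intro finite_measure_mono) auto

lemma cond_bound:
  assumes C: "finite C" "k \<notin> C" and z: "z \<noteq> k" and B: "B \<in> sets borel"
  shows "prob ({\<omega>\<in>space M. e < \<sigma> k \<omega> \<and> (\<forall>j\<in>C. \<sigma> j \<omega> \<le> e)} \<inter> {\<omega>\<in>space M. \<sigma> z \<omega> \<in> B}) * P0 {..e}
     \<le> prob {\<omega>\<in>space M. e < \<sigma> k \<omega> \<and> (\<forall>j\<in>C. \<sigma> j \<omega> \<le> e)} * P0 B"
proof -
  define E where "E = {\<omega>\<in>space M. e < \<sigma> k \<omega> \<and> (\<forall>j\<in>C. \<sigma> j \<omega> \<le> e)}"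
  define Bs where "Bs = (\<lambda>j. if j = k then {e<..} else {..e::real})"
  have Bsb: "\<And>j. Bs j \<in> sets borel" by (simp add: Bs_def)
  have Es: "E = (\<Inter>j\<in>insert k C. {\<omega>\<in>space M. \<sigma> j \<omega> \<in> Bs j})"
    using C unfolding E_def Bs_def by (auto 0 3 simp: Ball_def split: if_split_asm)
  have PE: "prob E = P0 {e<..} * (\<Prod>j\<in>C. P0 {..e})"
  proof -
    have "(\<Prod>j\<in>C. P0 (Bs j)) = (\<Prod>j\<in>C. P0 {..e})" using C by (intro prod.cong) (auto simp: Bs_def)
    moreover have "prob E = (\<Prod>j\<in>insert k C. P0 (Bs j))"
      unfolding Es by (rule prod_prob) (use C in \<open>auto simp: Bsb\<close>)
    then have "prob E = P0 (Bs k) * (\<Prod>j\<in>C. P0 (Bs j))" using C by simp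
    ultimately show ?thesis by (simp add: Bs_def)
  qed
  show ?thesis
  proof (cases "z \<in> C")
    case False
    have eq: "E \<inter> {\<omega>\<in>space M. \<sigma> z \<omega> \<in> B} = (\<Inter>j\<in>insert z (insert k C). {\<omega>\<in>space M. \<sigma> j \<omega> \<in> (Bs(z:=B)) j})"
      using C z False unfolding E_def Bs_def by (auto 0 3 simp: Ball_def split: if_split_asm)
    define f where "f = (\<lambda>j. P0 ((Bs(z:=B)) j))"
    have "prob (E \<inter> {\<omega>\<in>space M. \<sigma> z \<omega> \<in> B}) = (\<Prod>j\<in>insert z (insert k C). f j)"
      unfolding eq f_def by (rule prod_prob) (use C in \<open>auto simp: Bsb B\<close>)
    also have "\<dots> = f z * (f k * (\<Prod>j\<in>C. f j))" using C z False by simp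
    also have "(\<Prod>j\<in>C. f j) = (\<Prod>j\<in>C. P0 {..e})"
      using C False by (intro prod.cong) (auto simp: f_def Bs_def)
    finally have "prob (E \<inter> {\<omega>\<in>space M. \<sigma> z \<omega> \<in> B}) = P0 B * (P0 {e<..} * (\<Prod>j\<in>C. P0 {..e}))"
      using z by (simp add: f_def Bs_def)
    then have "prob (E \<inter> {\<omega>\<in>space M. \<sigma> z \<omega> \<in> B}) = prob E * P0 B" using PE by simp
    moreover have "0 \<le> prob E * P0 B" by (simp add: P0_nonneg)
    ultimately show ?thesis unfolding E_def[symmetric]
      using P0_le1[of "{..e}"] by (simp add: mult_left_le)
  next
    case True
    define C' where "C' = C - {z}"
    have C': "C = insert z C'" "z \<notin> C'" "finite C'" "k \<notin> C'" using True C by (auto simp: C'_def)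
    have eq: "E \<inter> {\<omega>\<in>space M. \<sigma> z \<omega> \<in> B} = (\<Inter>j\<in>insert k C. {\<omega>\<in>space M. \<sigma> j \<omega> \<in> (Bs(z:=B \<inter> {..e})) j})"
      using C z True unfolding E_def Bs_def by (auto 0 3 simp: Ball_def split: if_split_asm)
    define f where "f = (\<lambda>j. P0 ((Bs(z:=B \<inter> {..e})) j))"
    have "prob (E \<inter> {\<omega>\<in>space M. \<sigma> z \<omega> \<in> B}) = (\<Prod>j\<in>insert k (insert z C'). f j)"
      unfolding eq f_def C'(1)[symmetric] by (rule prod_prob) (use C B in \<open>auto simp: Bsb\<close>)
    also have "\<dots> = f k * (f z * (\<Prod>j\<in>C'. f j))" using C' z by simp
    also have "(\<Prod>j\<in>C'. f j) = (\<Prod>j\<in>C'. P0 {..e})"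
      using C' by (intro prod.cong) (auto simp: f_def Bs_def)
    finally have "prob (E \<inter> {\<omega>\<in>space M. \<sigma> z \<omega> \<in> B}) = P0 {e<..} * (P0 (B \<inter> {..e}) * (\<Prod>j\<in>C'. P0 {..e}))"
      using z by (simp add: f_def Bs_def)
    moreover have "prob E = P0 {e<..} * (P0 {..e} * (\<Prod>j\<in>C'. P0 {..e}))"
      unfolding PE using C' by simp
    moreover have le: "P0 (B \<inter> {..e}) \<le> P0 B" using B by (intro P0_mono) auto
    moreover have X: "0 \<le> P0 {..e} * (P0 {e<..} * (\<Prod>j\<in>C'. P0 {..e}))"
      by (simp add: P0_nonneg prod_nonneg)
    ultimately show ?thesis unfolding E_def[symmetric]
      using mult_left_mono[OF le X] by (simp add: mult_ac)
  qed
qed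

end


definition W :: "real \<Rightarrow> int \<Rightarrow> int set" where
  "W n k = {z. 1 \<le> \<bar>z - k\<bar> \<and> real_of_int \<bar>z - k\<bar> < n}"

lemma W_sub: "W n k \<subseteq> {k - \<lceil>n\<rceil> .. k + \<lceil>n\<rceil>}"
  unfolding W_def by (auto simp: abs_less_iff) linarith+

lemma W_finite[simp]: "finite (W n k)"
  using W_sub finite_subset by blast

lemma k_notin_W[simp]: "k \<notin> W n k" unfolding W_def by simp

lemma W_card: assumes "0 \<le> n" shows "real (card (W n k)) \<le> 2*n + 3"
proof -
  have "card (W n k) \<le> card {k - \<lceil>n\<rceil> .. k + \<lceil>n\<rceil>}"
    by (intro card_mono W_sub) auto
  also have "\<dots> = nat (2 * \<lceil>n\<rceil> + 1)" by simp
  finally have "real (card (W n k)) \<le> real (nat (2 * \<lceil>n\<rceil> + 1))" by linarith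
  also have "\<dots> = 2 * real_of_int \<lceil>n\<rceil> + 1" using assms by simp
  also have "\<dots> \<le> 2*n+3" by linarith
  finally show ?thesis .
qed

definition wt :: "real \<Rightarrow> real \<Rightarrow> nat \<Rightarrow> real" where
  "wt a y0 j = (if y0 \<le> a/2^j then a/2^j else 0)"

lemma wt_nonneg: "0 < y0 \<Longrightarrow> 0 \<le> wt a y0 j"
  unfolding wt_def by auto

lemma decomp:
  assumes y0: "0 < y0" and N: "a/2^N < y0" and x: "x \<le> a"
  shows "x \<le> y0 + (\<Sum>j<N. wt a y0 j * (if a/2^(Suc j) < x then 1 else 0))"
proof (cases "x \<le> y0")
  case True
  have "0 \<le> (\<Sum>j<N. wt a y0 j * (if a/2^(Suc j) < x then 1 else 0))"
    by (intro sum_nonneg) (simp add: wt_nonneg[OF y0])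
  then show ?thesis using True by linarith
next
  case False
  have N0: "N \<noteq> 0"
  proof
    assume "N = 0" then have "a < y0" using N by simp
    then show False using False x by linarith
  qed
  define j0 where "j0 = (LEAST j. a/2^(Suc j) < x)"
  have ex: "a/2^(Suc (N-1)) < x" using N0 N False by simp
  have j0: "a/2^(Suc j0) < x" unfolding j0_def by (rule LeastI[of _ "N-1"]) (rule ex)
  have j0N: "j0 < N" using Least_le[of "\<lambda>j. a/2^(Suc j) < x" "N-1", OF ex] N0 unfolding j0_def[symmetric] by linarith
  have xle: "x \<le> a/2^j0"
  proof (cases j0)
    case 0 then show ?thesis using x by simp
  next
    case (Suc i)
    have "\<not> a/2^(Suc i) < x" using not_less_Least[of i "\<lambda>j. a/2^(Suc j) < x"] Suc unfolding j0_def by simp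
    then show ?thesis using Suc by simp
  qed
  have w: "wt a y0 j0 = a/2^j0" using xle False unfolding wt_def by auto
  have "x \<le> wt a y0 j0 * (if a/2^(Suc j0) < x then 1 else 0)" using w j0 xle by simp
  also have "\<dots> \<le> (\<Sum>j<N. wt a y0 j * (if a/2^(Suc j) < x then 1 else 0))"
    by (rule member_le_sum) (use j0N in \<open>auto simp: wt_nonneg[OF y0]\<close>)
  finally show ?thesis using y0 by linarith
qed


context iidsetup
begin

lemma window_bound:
  fixes Zf :: "'a \<Rightarrow> int" and F :: "int \<Rightarrow> 'a set" and KS :: "int set"
  assumes KS: "finite KS"
   and Fev: "\<And>k. k\<in>KS \<Longrightarrow> F k \<in> events"
   and Fdisj: "disjoint_family_on F KS"
   and FZ: "\<And>k \<omega>. k\<in>KS \<Longrightarrow> \<omega> \<in> F k \<Longrightarrow> Zf \<omega> = k"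
   and Fcond: "\<And>k z B. k\<in>KS \<Longrightarrow> z \<noteq> k \<Longrightarrow> B \<in> sets borel \<Longrightarrow>
        prob (F k \<inter> {\<omega>\<in>space M. \<sigma> z \<omega> \<in> B}) * Q \<le> prob (F k) * P0 B"
   and Q: "0 < Q"
   and G: "prob (space M - (\<Union>k\<in>KS. F k)) \<le> \<delta>"
   and n: "0 \<le> n" and a: "0 < a" and y0: "0 < y0" and N: "a/2^N < y0"
   and c: "0 < c - (2*n+3)*y0"
  shows "prob {\<omega>\<in>space M. c \<le> (\<Sum>z\<in>W n (Zf \<omega>). \<sigma> z \<omega>)}
     \<le> \<delta> + (2*n+3) * P0 {a<..} / Q
        + (2*n+3) * (\<Sum>j<N. wt a y0 j * P0 {a/2^(Suc j)<..}) / (Q * (c - (2*n+3)*y0))"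
proof -
  define c' where "c' = c - (2*n+3)*y0"
  define S where "S = (\<Sum>j<N. wt a y0 j * P0 {a/2^(Suc j)<..})"
  define b where "b = (\<lambda>j::nat. a/2^(Suc j))"
  have Snn: "0 \<le> S" unfolding S_def by (intro sum_nonneg mult_nonneg_nonneg wt_nonneg[OF y0] P0_nonneg)
  define G' where "G' = space M - (\<Union>k\<in>KS. F k)"
  define A where "A = (\<Union>k\<in>KS. \<Union>z\<in>W n k. F k \<inter> {\<omega>\<in>space M. \<sigma> z \<omega> \<in> {a<..}})"
  define g where "g = (\<lambda>k z j \<omega>. wt a y0 j * indicator (F k \<inter> {\<omega>\<in>space M. \<sigma> z \<omega> \<in> {b j<..}}) \<omega>)"
  define Uf where "Uf = (\<lambda>\<omega>. \<Sum>k\<in>KS. \<Sum>z\<in>W n k. \<Sum>j<N. g k z j \<omega>)"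
  define U' where "U' = {\<omega>\<in>space M. c' \<le> Uf \<omega>}"
  have Fsub: "\<And>k. k \<in> KS \<Longrightarrow> F k \<subseteq> space M" using Fev sets.sets_into_space by blast
  have G'ev: "G' \<in> events" unfolding G'_def using KS Fev by auto
  have Aev: "A \<in> events" unfolding A_def using KS Fev by (intro sets.finite_UN) auto
  have Ufm: "Uf \<in> borel_measurable M" unfolding Uf_def g_def using Fev by measurable
  have U'ev: "U' \<in> events" unfolding U'_def using Ufm by measurable
  have sumF: "(\<Sum>k\<in>KS. prob (F k)) \<le> 1"
  proof -
    have "(\<Sum>k\<in>KS. prob (F k)) = prob (\<Union>k\<in>KS. F k)"
      using KS Fev Fdisj by (intro measure_finite_Union[symmetric]) auto
    then show ?thesis by simp
  qed
  have cardW: "\<And>k. real (card (W n k)) \<le> 2*n+3" using W_card[OF n] by blast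
  have PFk: "\<And>k. 0 \<le> prob (F k)" by simp
  have incl: "{\<omega>\<in>space M. c \<le> (\<Sum>z\<in>W n (Zf \<omega>). \<sigma> z \<omega>)} \<subseteq> G' \<union> A \<union> U'"
  proof
    fix \<omega> assume om: "\<omega> \<in> {\<omega>\<in>space M. c \<le> (\<Sum>z\<in>W n (Zf \<omega>). \<sigma> z \<omega>)}"
    show "\<omega> \<in> G' \<union> A \<union> U'"
    proof (rule ccontr)
      assume nin: "\<omega> \<notin> G' \<union> A \<union> U'"
      from om nin obtain k where k: "k \<in> KS" "\<omega> \<in> F k" unfolding G'_def by auto
      have Zk: "Zf \<omega> = k" using FZ k by blast
      have sp: "\<omega> \<in> space M" using om by auto
      have small: "\<And>z. z \<in> W n k \<Longrightarrow> \<sigma> z \<omega> \<le> a"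
        using nin k sp unfolding A_def by force
      have ind: "\<And>k' z j. k' \<in> KS \<Longrightarrow> indicator (F k' \<inter> {\<omega>\<in>space M. \<sigma> z \<omega> \<in> {b j<..}}) \<omega>
            = (if k' = k \<and> b j < \<sigma> z \<omega> then (1::real) else 0)"
      proof -
        fix k' z j assume k': "k' \<in> KS"
        show "indicator (F k' \<inter> {\<omega>\<in>space M. \<sigma> z \<omega> \<in> {b j<..}}) \<omega>
            = (if k' = k \<and> b j < \<sigma> z \<omega> then (1::real) else 0)"
        proof (cases "k' = k")
          case True then show ?thesis using k sp by (auto simp: indicator_def)
        next
          case False
          then have "\<omega> \<notin> F k'" using Fdisj k k' unfolding disjoint_family_on_def by blast
          then show ?thesis using False by (auto simp: indicator_def)
        qed
      qed
      have "Uf \<omega> = (\<Sum>k'\<in>KS. if k' = k then (\<Sum>z\<in>W n k. \<Sum>j<N. wt a y0 j * (if b j < \<sigma> z \<omega> then 1 else 0)) else 0)"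
      proof -
        have "\<And>k'. k' \<in> KS \<Longrightarrow> (\<Sum>z\<in>W n k'. \<Sum>j<N. wt a y0 j * indicator (F k' \<inter> {\<omega>\<in>space M. \<sigma> z \<omega> \<in> {b j<..}}) \<omega>)
           = (if k' = k then (\<Sum>z\<in>W n k. \<Sum>j<N. wt a y0 j * (if b j < \<sigma> z \<omega> then 1 else 0)) else 0)"
        proof -
          fix k' assume kk: "k' \<in> KS"
          show "(\<Sum>z\<in>W n k'. \<Sum>j<N. wt a y0 j * indicator (F k' \<inter> {\<omega>\<in>space M. \<sigma> z \<omega> \<in> {b j<..}}) \<omega>)
           = (if k' = k then (\<Sum>z\<in>W n k. \<Sum>j<N. wt a y0 j * (if b j < \<sigma> z \<omega> then 1 else 0)) else 0)"
            by (simp only: ind[OF kk]) (cases "k' = k"; simp)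
        qed
        then show ?thesis unfolding Uf_def g_def by (intro sum.cong refl)
      qed
      also have "\<dots> = (\<Sum>z\<in>W n k. \<Sum>j<N. wt a y0 j * (if b j < \<sigma> z \<omega> then 1 else 0))"
        using k KS by simp
      finally have Ufo: "Uf \<omega> = (\<Sum>z\<in>W n k. \<Sum>j<N. wt a y0 j * (if b j < \<sigma> z \<omega> then 1 else 0))" .
      have "c \<le> (\<Sum>z\<in>W n k. \<sigma> z \<omega>)" using om Zk by simp
      also have "\<dots> \<le> (\<Sum>z\<in>W n k. y0 + (\<Sum>j<N. wt a y0 j * (if b j < \<sigma> z \<omega> then 1 else 0)))"
        by (intro sum_mono) (unfold b_def, rule decomp[OF y0 N small])
      also have "\<dots> = real (card (W n k)) * y0 + Uf \<omega>"
        by (simp add: sum.distrib Ufo)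
      also have "\<dots> \<le> (2*n+3) * y0 + Uf \<omega>"
        using cardW[of k] y0 by (simp add: mult_right_mono)
      finally have "c' \<le> Uf \<omega>" unfolding c'_def by linarith
      then show False using nin sp unfolding U'_def by auto
    qed
  qed
  have "prob {\<omega>\<in>space M. c \<le> (\<Sum>z\<in>W n (Zf \<omega>). \<sigma> z \<omega>)} \<le> prob (G' \<union> A \<union> U')"
    using incl G'ev Aev U'ev by (intro finite_measure_mono) auto
  also have "\<dots> \<le> prob G' + prob A + prob U'"
    using G'ev Aev U'ev by (meson add_right_mono measure_Un_le order_trans sets.Un)
  also have "prob G' \<le> \<delta>" using G unfolding G'_def .
  also have "prob A \<le> (2*n+3) * P0 {a<..} / Q"
  proof -
    have "prob A \<le> (\<Sum>k\<in>KS. prob (\<Union>z\<in>W n k. F k \<inter> {\<omega>\<in>space M. \<sigma> z \<omega> \<in> {a<..}}))"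
      unfolding A_def using KS Fev by (intro measure_UNION_le) auto
    also have "\<dots> \<le> (\<Sum>k\<in>KS. \<Sum>z\<in>W n k. prob (F k \<inter> {\<omega>\<in>space M. \<sigma> z \<omega> \<in> {a<..}}))"
      using Fev by (intro sum_mono measure_UNION_le) auto
    also have "\<dots> \<le> (\<Sum>k\<in>KS. \<Sum>z\<in>W n k. prob (F k) * P0 {a<..} / Q)"
    proof (intro sum_mono)
      fix k z assume kz: "k \<in> KS" "z \<in> W n k"
      then have "z \<noteq> k" by auto
      from Fcond[OF kz(1) this, of "{a<..}"] Q
      show "prob (F k \<inter> {\<omega>\<in>space M. \<sigma> z \<omega> \<in> {a<..}}) \<le> prob (F k) * P0 {a<..} / Q"
        by (simp add: pos_le_divide_eq)
    qed
    also have "\<dots> = (\<Sum>k\<in>KS. real (card (W n k)) * (prob (F k) * P0 {a<..} / Q))"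
      by simp
    also have "\<dots> \<le> (\<Sum>k\<in>KS. (2*n+3) * (prob (F k) * P0 {a<..} / Q))"
      using cardW Q by (intro sum_mono mult_right_mono) (auto simp: P0_nonneg)
    also have "\<dots> = (2*n+3) * P0 {a<..} / Q * (\<Sum>k\<in>KS. prob (F k))"
      by (simp add: sum_distrib_left sum_distrib_right sum_divide_distrib mult_ac)
    also have "\<dots> \<le> (2*n+3) * P0 {a<..} / Q * 1"
      using sumF n Q by (intro mult_left_mono) (auto simp: P0_nonneg)
    finally show ?thesis by simp
  qed
  also have "prob U' \<le> (2*n+3) * S / (Q * c')"
  proof -
    have intg: "\<And>k z j. k \<in> KS \<Longrightarrow> integrable M (g k z j)" unfolding g_def
      apply (intro integrable_mult_right integrable_real_indicator)
      using Fev sev by (auto intro!: sets.Int simp: less_top[symmetric])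
    have intgl: "\<And>k z j. k \<in> KS \<Longrightarrow> (\<integral>\<omega>. g k z j \<omega> \<partial>M) = wt a y0 j * prob (F k \<inter> {\<omega>\<in>space M. \<sigma> z \<omega> \<in> {b j<..}})"
      unfolding g_def using Fsub by (simp add: Int_absorb2 le_infI1)
    have intU: "integrable M Uf" unfolding Uf_def
      by (intro Bochner_Integration.integrable_sum intg)
    have "prob U' \<le> (\<integral>\<omega>. Uf \<omega> \<partial>M) / c'"
      unfolding U'_def using c unfolding c'_def[symmetric]
      by (intro integral_Markov_inequality_measure[OF intU, where A="space M"])
         (auto simp: Uf_def g_def wt_nonneg[OF y0] intro!: sum_nonneg)
    also have "(\<integral>\<omega>. Uf \<omega> \<partial>M) = (\<Sum>k\<in>KS. \<Sum>z\<in>W n k. \<Sum>j<N. \<integral>\<omega>. g k z j \<omega> \<partial>M)"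
      unfolding Uf_def
      by (simp add: Bochner_Integration.integral_sum Bochner_Integration.integrable_sum intg)
    also have "\<dots> = (\<Sum>k\<in>KS. \<Sum>z\<in>W n k. \<Sum>j<N. wt a y0 j * prob (F k \<inter> {\<omega>\<in>space M. \<sigma> z \<omega> \<in> {b j<..}}))"
      by (intro sum.cong refl) (simp add: intgl)
    also have "\<dots> \<le> (\<Sum>k\<in>KS. \<Sum>z\<in>W n k. \<Sum>j<N. wt a y0 j * (prob (F k) * P0 {b j<..} / Q))"
    proof (intro sum_mono mult_left_mono)
      fix k z j assume kz: "k \<in> KS" "z \<in> W n k"
      then have "z \<noteq> k" by auto
      from Fcond[OF kz(1) this, of "{b j<..}"] Q
      show "prob (F k \<inter> {\<omega>\<in>space M. \<sigma> z \<omega> \<in> {b j<..}}) \<le> prob (F k) * P0 {b j<..} / Q"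
        by (simp add: pos_le_divide_eq)
    qed (simp add: wt_nonneg[OF y0])
    also have "\<dots> = (\<Sum>k\<in>KS. real (card (W n k)) * (prob (F k) * S / Q))"
      by (simp add: S_def b_def sum_distrib_left sum_distrib_right sum_divide_distrib mult_ac)
    also have "\<dots> \<le> (\<Sum>k\<in>KS. (2*n+3) * (prob (F k) * S / Q))"
      using cardW Q by (intro sum_mono mult_right_mono)
        (auto simp: S_def P0_nonneg wt_nonneg[OF y0] intro!: sum_nonneg mult_nonneg_nonneg divide_nonneg_pos)
    also have "\<dots> = (2*n+3) * S / Q * (\<Sum>k\<in>KS. prob (F k))"
      by (simp add: sum_distrib_left sum_distrib_right sum_divide_distrib mult_ac)
    also have "\<dots> \<le> (2*n+3) * S / Q * 1"
      using sumF n Q Snn by (intro mult_left_mono) auto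
    finally have "prob U' \<le> (2*n+3) * S / Q / c'" using c unfolding c'_def
      by (simp add: divide_right_mono)
    then show ?thesis by simp
  qed
  finally show ?thesis unfolding S_def c'_def by simp
qed

end



lemma lim_power_bound:
  fixes X D Q :: real
  assumes "\<And>K::nat. K \<ge> 1 \<Longrightarrow> X \<le> Q^K + D" "0 \<le> Q" "Q < 1"
  shows "X \<le> D"
proof -
  have "(\<lambda>K. Q^K + D) \<longlonglongrightarrow> 0 + D"
    by (intro tendsto_add LIMSEQ_power_zero tendsto_const) (use assms in auto)
  then have "(\<lambda>K. Q^K + D) \<longlonglongrightarrow> D" by simp
  then show ?thesis
    by (rule LIMSEQ_le_const) (use assms(1) in \<open>auto intro!: exI[of _ 1]\<close>)
qed

context iidsetup
begin

lemma Fev1: "{\<omega>\<in>space M. e < \<sigma> k \<omega> \<and> (\<forall>j\<in>C. \<sigma> j \<omega> \<le> e)} \<in> events" if "finite C"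
proof -
  have "{\<omega>\<in>space M. e < \<sigma> k \<omega> \<and> (\<forall>j\<in>C. \<sigma> j \<omega> \<le> e)}
     = {\<omega>\<in>space M. \<sigma> k \<omega> \<in> {e<..}} \<inter> (space M \<inter> (\<Inter>j\<in>C. {\<omega>\<in>space M. \<sigma> j \<omega> \<in> {..e}}))"
    by auto
  also have "\<dots> \<in> events"
  proof (cases "C = {}")
    case True then show ?thesis by (simp add: sev)
  next
    case False then show ?thesis using that by (intro sets.Int sev sets.finite_INT) auto
  qed
  finally show ?thesis .
qed

lemma allle_prob: "K \<ge> 1 \<Longrightarrow> finite J \<Longrightarrow> card J = K \<Longrightarrow>
   prob {\<omega>\<in>space M. \<forall>j\<in>J. \<sigma> j \<omega> \<le> e} = P0 {..e} ^ K"
proof -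
  assume K: "K \<ge> 1" "finite J" "card J = K"
  then have "J \<noteq> {}" by auto
  have "{\<omega>\<in>space M. \<forall>j\<in>J. \<sigma> j \<omega> \<le> e} = (\<Inter>j\<in>J. {\<omega>\<in>space M. \<sigma> j \<omega> \<in> {..e}})"
    using \<open>J \<noteq> {}\<close> by auto
  also have "prob \<dots> = (\<Prod>j\<in>J. P0 {..e})" using K \<open>J \<noteq> {}\<close> by (intro prod_prob) auto
  finally show ?thesis using K by simp
qed

lemma allle_ev: "finite J \<Longrightarrow> {\<omega>\<in>space M. \<forall>j\<in>J. \<sigma> j \<omega> \<le> e} \<in> events"
  using Fev1[of J e 0] by (cases "J = {}") (auto simp: Collect_conj_eq)


lemma Z1_bound:
  assumes Q: "0 < P0 {..e}" "P0 {..e} < 1"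
   and n: "0 \<le> n" and a: "0 < a" and y0: "0 < y0" and N: "a/2^N < y0"
   and c: "0 < c - (2*n+3)*y0"
  shows "prob {\<omega>\<in>space M. c \<le> (\<Sum>z\<in>W n (Inf {z. 0 < z \<and> e < \<sigma> z \<omega>}). \<sigma> z \<omega>)}
     \<le> (2*n+3) * P0 {a<..} / P0 {..e}
        + (2*n+3) * (\<Sum>j<N. wt a y0 j * P0 {a/2^(Suc j)<..}) / (P0 {..e} * (c - (2*n+3)*y0))"
    (is "?P \<le> ?D")
proof -
  have "?P \<le> P0 {..e}^K + ?D" if K: "K \<ge> 1" for K :: nat
  proof -
    define F where "F = (\<lambda>k::int. {\<omega>\<in>space M. e < \<sigma> k \<omega> \<and> (\<forall>j\<in>{1..<k}. \<sigma> j \<omega> \<le> e)})"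
    have G: "prob (space M - (\<Union>k\<in>{1..int K}. F k)) \<le> P0 {..e}^K"
    proof -
      have "space M - (\<Union>k\<in>{1..int K}. F k) \<subseteq> {\<omega>\<in>space M. \<forall>j\<in>{1..int K}. \<sigma> j \<omega> \<le> e}"
      proof
        fix \<omega> assume om: "\<omega> \<in> space M - (\<Union>k\<in>{1..int K}. F k)"
        show "\<omega> \<in> {\<omega>\<in>space M. \<forall>j\<in>{1..int K}. \<sigma> j \<omega> \<le> e}"
        proof (rule ccontr)
          assume "\<omega> \<notin> {\<omega>\<in>space M. \<forall>j\<in>{1..int K}. \<sigma> j \<omega> \<le> e}"
          then obtain j where j: "j \<in> {1..int K}" "e < \<sigma> j \<omega>" using om by force
          define T where "T = {j\<in>{1..int K}. e < \<sigma> j \<omega>}"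
          have T: "finite T" "T \<noteq> {}" using j unfolding T_def by (auto intro: finite_subset[of _ "{1..int K}"])
          define m where "m = Min T"
          have mT: "m \<in> T" unfolding m_def using T by (rule Min_in)
          have mmin: "\<And>i. i \<in> T \<Longrightarrow> m \<le> i" unfolding m_def using T by simp
          have "\<omega> \<in> F m"
          proof -
            have "\<sigma> i \<omega> \<le> e" if i: "i \<in> {1..<m}" for i
            proof (rule ccontr)
              assume "\<not> \<sigma> i \<omega> \<le> e"
              then have "i \<in> T" using i mT unfolding T_def by auto
              then show False using mmin[of i] i by simp
            qed
            then show ?thesis using mT om unfolding F_def T_def by auto
          qed
          then show False using om mT unfolding T_def by auto
        qed
      qed
      then have "prob (space M - (\<Union>k\<in>{1..int K}. F k)) \<le> prob {\<omega>\<in>space M. \<forall>j\<in>{1..int K}. \<sigma> j \<omega> \<le> e}"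
        by (intro finite_measure_mono allle_ev) auto
      also have "\<dots> = P0 {..e}^K" using K by (intro allle_prob) auto
      finally show ?thesis .
    qed
    have "prob {\<omega>\<in>space M. c \<le> (\<Sum>z\<in>W n (Inf {z. 0 < z \<and> e < \<sigma> z \<omega>}). \<sigma> z \<omega>)}
     \<le> P0 {..e}^K + (2*n+3) * P0 {a<..} / P0 {..e}
        + (2*n+3) * (\<Sum>j<N. wt a y0 j * P0 {a/2^(Suc j)<..}) / (P0 {..e} * (c - (2*n+3)*y0))"
    proof (rule window_bound[where KS="{1..int K}" and F=F and Q="P0 {..e}"])
      show "\<And>k. k \<in> {1..int K} \<Longrightarrow> F k \<in> events" unfolding F_def by (intro Fev1) auto
      show "disjoint_family_on F {1..int K}"
        unfolding disjoint_family_on_def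
      proof (intro ballI impI)
        fix k1 k2 assume "k1 \<in> {1..int K}" "k2 \<in> {1..int K}" "k1 \<noteq> k2"
        then consider "k1 < k2" "1 \<le> k1" | "k2 < k1" "1 \<le> k2" by fastforce
        then show "F k1 \<inter> F k2 = {}"
          by cases (unfold F_def, force+)
      qed
      show "\<And>k \<omega>. k \<in> {1..int K} \<Longrightarrow> \<omega> \<in> F k \<Longrightarrow> Inf {z. 0 < z \<and> e < \<sigma> z \<omega>} = k"
      proof -
        fix k \<omega> assume k: "k \<in> {1..int K}" "\<omega> \<in> F k"
        show "Inf {z. 0 < z \<and> e < \<sigma> z \<omega>} = k"
        proof (rule cInf_eq_minimum)
          show "k \<in> {z. 0 < z \<and> e < \<sigma> z \<omega>}" using k unfolding F_def by auto
          fix x assume x: "x \<in> {z. 0 < z \<and> e < \<sigma> z \<omega>}"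
          show "k \<le> x"
          proof (rule ccontr)
            assume "\<not> k \<le> x"
            then have "x \<in> {1..<k}" using x by auto
            then have "\<sigma> x \<omega> \<le> e" using k unfolding F_def by blast
            then show False using x by auto
          qed
        qed
      qed
      show "\<And>k z B. k \<in> {1..int K} \<Longrightarrow> z \<noteq> k \<Longrightarrow> B \<in> sets borel \<Longrightarrow>
        prob (F k \<inter> {\<omega>\<in>space M. \<sigma> z \<omega> \<in> B}) * P0 {..e} \<le> prob (F k) * P0 B"
        unfolding F_def by (rule cond_bound) auto
    qed (use Q n a y0 N c G in auto)
    then show ?thesis by (simp add: add.assoc)
  qed
  then show ?thesis by (rule lim_power_bound) (use Q in auto)
qed

lemma Z2_bound:
  assumes Q: "0 < P0 {..e}" "P0 {..e} < 1"
   and n: "0 \<le> n" and a: "0 < a" and y0: "0 < y0" and N: "a/2^N < y0"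
   and c: "0 < c - (2*n+3)*y0"
  shows "prob {\<omega>\<in>space M. c \<le> (\<Sum>z\<in>W n (Sup {z. z \<le> 0 \<and> e < \<sigma> z \<omega>}). \<sigma> z \<omega>)}
     \<le> (2*n+3) * P0 {a<..} / P0 {..e}
        + (2*n+3) * (\<Sum>j<N. wt a y0 j * P0 {a/2^(Suc j)<..}) / (P0 {..e} * (c - (2*n+3)*y0))"
    (is "?P \<le> ?D")
proof -
  have "?P \<le> P0 {..e}^K + ?D" if K: "K \<ge> 1" for K :: nat
  proof -
    define F where "F = (\<lambda>k::int. {\<omega>\<in>space M. e < \<sigma> k \<omega> \<and> (\<forall>j\<in>{k<..0}. \<sigma> j \<omega> \<le> e)})"
    have G: "prob (space M - (\<Union>k\<in>{-int K<..0}. F k)) \<le> P0 {..e}^K"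
    proof -
      have "space M - (\<Union>k\<in>{-int K<..0}. F k) \<subseteq> {\<omega>\<in>space M. \<forall>j\<in>{-int K<..0}. \<sigma> j \<omega> \<le> e}"
      proof
        fix \<omega> assume om: "\<omega> \<in> space M - (\<Union>k\<in>{-int K<..0}. F k)"
        show "\<omega> \<in> {\<omega>\<in>space M. \<forall>j\<in>{-int K<..0}. \<sigma> j \<omega> \<le> e}"
        proof (rule ccontr)
          assume "\<omega> \<notin> {\<omega>\<in>space M. \<forall>j\<in>{-int K<..0}. \<sigma> j \<omega> \<le> e}"
          then obtain j where j: "j \<in> {-int K<..0}" "e < \<sigma> j \<omega>" using om by force
          define T where "T = {j\<in>{-int K<..0}. e < \<sigma> j \<omega>}"
          have T: "finite T" "T \<noteq> {}" using j unfolding T_def by (auto intro: finite_subset[of _ "{-int K<..0}"])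
          define m where "m = Max T"
          have mT: "m \<in> T" unfolding m_def using T by (rule Max_in)
          have mmax: "\<And>i. i \<in> T \<Longrightarrow> i \<le> m" unfolding m_def using T by simp
          have "\<omega> \<in> F m"
          proof -
            have "\<sigma> i \<omega> \<le> e" if i: "i \<in> {m<..0}" for i
            proof (rule ccontr)
              assume "\<not> \<sigma> i \<omega> \<le> e"
              then have "i \<in> T" using i mT unfolding T_def by auto
              then show False using mmax[of i] i by simp
            qed
            then show ?thesis using mT om unfolding F_def T_def by auto
          qed
          then show False using om mT unfolding T_def by auto
        qed
      qed
      then have "prob (space M - (\<Union>k\<in>{-int K<..0}. F k)) \<le> prob {\<omega>\<in>space M. \<forall>j\<in>{-int K<..0}. \<sigma> j \<omega> \<le> e}"
        by (intro finite_measure_mono allle_ev) auto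
      also have "\<dots> = P0 {..e}^K" using K by (intro allle_prob) auto
      finally show ?thesis .
    qed
    have "prob {\<omega>\<in>space M. c \<le> (\<Sum>z\<in>W n (Sup {z. z \<le> 0 \<and> e < \<sigma> z \<omega>}). \<sigma> z \<omega>)}
     \<le> P0 {..e}^K + (2*n+3) * P0 {a<..} / P0 {..e}
        + (2*n+3) * (\<Sum>j<N. wt a y0 j * P0 {a/2^(Suc j)<..}) / (P0 {..e} * (c - (2*n+3)*y0))"
    proof (rule window_bound[where KS="{-int K<..0}" and F=F and Q="P0 {..e}"])
      show "\<And>k. k \<in> {-int K<..0} \<Longrightarrow> F k \<in> events" unfolding F_def by (intro Fev1) auto
      show "disjoint_family_on F {-int K<..0}"
        unfolding disjoint_family_on_def
      proof (intro ballI impI)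
        fix k1 k2 assume "k1 \<in> {-int K<..0}" "k2 \<in> {-int K<..0}" "k1 \<noteq> k2"
        then consider "k1 < k2" "k2 \<le> 0" | "k2 < k1" "k1 \<le> 0" by fastforce
        then show "F k1 \<inter> F k2 = {}"
          by cases (unfold F_def, force+)
      qed
      show "\<And>k \<omega>. k \<in> {-int K<..0} \<Longrightarrow> \<omega> \<in> F k \<Longrightarrow> Sup {z. z \<le> 0 \<and> e < \<sigma> z \<omega>} = k"
      proof -
        fix k \<omega> assume k: "k \<in> {-int K<..0}" "\<omega> \<in> F k"
        show "Sup {z. z \<le> 0 \<and> e < \<sigma> z \<omega>} = k"
        proof (rule cSup_eq_maximum)
          show "k \<in> {z. z \<le> 0 \<and> e < \<sigma> z \<omega>}" using k unfolding F_def by auto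
          fix x assume x: "x \<in> {z. z \<le> 0 \<and> e < \<sigma> z \<omega>}"
          show "x \<le> k"
          proof (rule ccontr)
            assume "\<not> x \<le> k"
            then have "x \<in> {k<..0}" using x by auto
            then show False using k x unfolding F_def by force
          qed
        qed
      qed
      show "\<And>k z B. k \<in> {-int K<..0} \<Longrightarrow> z \<noteq> k \<Longrightarrow> B \<in> sets borel \<Longrightarrow>
        prob (F k \<inter> {\<omega>\<in>space M. \<sigma> z \<omega> \<in> B}) * P0 {..e} \<le> prob (F k) * P0 B"
        unfolding F_def by (rule cond_bound) auto
    qed (use Q n a y0 N c G in auto)
    then show ?thesis by (simp add: add.assoc)
  qed
  then show ?thesis by (rule lim_power_bound) (use Q in auto)
qed

end


lemma int_Inf_pos:
  fixes S :: "int set"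
  assumes S: "S \<subseteq> {1..}" "S \<noteq> {}"
  shows "Inf S = k \<longleftrightarrow> k \<in> S \<and> (\<forall>j\<in>{1..<k}. j \<notin> S)"
proof -
  obtain z where z: "z \<in> S" using S by auto
  define m where "m = Min (S \<inter> {1..z})"
  have z1: "1 \<le> z" using z S by auto
  have fin: "finite (S \<inter> {1..z})" "S \<inter> {1..z} \<noteq> {}" using z z1 by auto
  have mS: "m \<in> S" unfolding m_def using Min_in[OF fin] by auto
  have mle: "\<And>x. x \<in> S \<Longrightarrow> m \<le> x"
  proof -
    fix x assume x: "x \<in> S"
    show "m \<le> x"
    proof (cases "x \<le> z")
      case True then have "x \<in> S \<inter> {1..z}" using x S by auto
      then show ?thesis unfolding m_def using fin by simp
    next
      case False
      have "m \<le> z" unfolding m_def using fin z S by (intro Min_le) auto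
      then show ?thesis using False by simp
    qed
  qed
  have Im: "Inf S = m" by (rule cInf_eq_minimum[OF mS mle])
  show ?thesis
  proof
    assume "Inf S = k"
    then have "k = m" using Im by simp
    then show "k \<in> S \<and> (\<forall>j\<in>{1..<k}. j \<notin> S)" using mS mle by force
  next
    assume k: "k \<in> S \<and> (\<forall>j\<in>{1..<k}. j \<notin> S)"
    have "m \<le> k" using mle k by auto
    moreover have "k \<le> m"
    proof (rule ccontr)
      assume "\<not> k \<le> m"
      then have "m \<in> {1..<k}" using mS S by auto
      then show False using k mS by auto
    qed
    ultimately show "Inf S = k" using Im by simp
  qed
qed

lemma int_Sup_nonpos:
  fixes S :: "int set"
  assumes S: "S \<subseteq> {..0}" "S \<noteq> {}"
  shows "Sup S = k \<longleftrightarrow> k \<in> S \<and> (\<forall>j\<in>{k<..0}. j \<notin> S)"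
proof -
  obtain z where z: "z \<in> S" using S by auto
  define m where "m = Max (S \<inter> {z..0})"
  have z1: "z \<le> 0" using z S by auto
  have fin: "finite (S \<inter> {z..0})" "S \<inter> {z..0} \<noteq> {}" using z z1 by auto
  have mS: "m \<in> S" unfolding m_def using Max_in[OF fin] by auto
  have mle: "\<And>x. x \<in> S \<Longrightarrow> x \<le> m"
  proof -
    fix x assume x: "x \<in> S"
    show "x \<le> m"
    proof (cases "z \<le> x")
      case True then have "x \<in> S \<inter> {z..0}" using x S by auto
      then show ?thesis unfolding m_def using fin by simp
    next
      case False
      have "z \<le> m" unfolding m_def using fin z S by (intro Max_ge) auto
      then show ?thesis using False by simp
    qed
  qed
  have Im: "Sup S = m" by (rule cSup_eq_maximum[OF mS mle])
  show ?thesis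
  proof
    assume "Sup S = k"
    then have "k = m" using Im by simp
    then show "k \<in> S \<and> (\<forall>j\<in>{k<..0}. j \<notin> S)" using mS mle by force
  next
    assume k: "k \<in> S \<and> (\<forall>j\<in>{k<..0}. j \<notin> S)"
    have "k \<le> m" using mle k by auto
    moreover have "m \<le> k"
    proof (rule ccontr)
      assume "\<not> m \<le> k"
      then have "m \<in> {k<..0}" using mS S by auto
      then show False using k mS by auto
    qed
    ultimately show "Sup S = k" using Im by simp
  qed
qed

context iidsetup
begin

lemma Z1f_meas: "(\<lambda>\<omega>. Inf {z. 0 < z \<and> e < \<sigma> z \<omega>}) \<in> measurable M (count_space UNIV)"
proof (subst measurable_count_space_eq2_countable, intro conjI ballI)
  fix k :: int
  have "(\<lambda>\<omega>. Inf {z. 0 < z \<and> e < \<sigma> z \<omega>}) -` {k} \<inter> space M =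
    {\<omega>\<in>space M. (\<exists>z::int. 0 < z \<and> e < \<sigma> z \<omega>) \<and> 0 < k \<and> e < \<sigma> k \<omega> \<and> (\<forall>j\<in>{1..<k}. \<not> e < \<sigma> j \<omega>)}
    \<union> {\<omega>\<in>space M. (\<forall>z::int. 0 < z \<longrightarrow> \<not> e < \<sigma> z \<omega>) \<and> Inf ({}::int set) = k}"
  proof -
    have "Inf {z. 0 < z \<and> e < \<sigma> z \<omega>} = k \<longleftrightarrow>
       ((\<exists>z::int. 0 < z \<and> e < \<sigma> z \<omega>) \<and> 0 < k \<and> e < \<sigma> k \<omega> \<and> (\<forall>j\<in>{1..<k}. \<not> e < \<sigma> j \<omega>))
      \<or> ((\<forall>z::int. 0 < z \<longrightarrow> \<not> e < \<sigma> z \<omega>) \<and> Inf ({}::int set) = k)" for \<omega>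
    proof (cases "\<exists>z::int. 0 < z \<and> e < \<sigma> z \<omega>")
      case True
      then have "{z. 0 < z \<and> e < \<sigma> z \<omega>} \<subseteq> {1..}" "{z. 0 < z \<and> e < \<sigma> z \<omega>} \<noteq> {}" by auto
      from int_Inf_pos[OF this, of k] True show ?thesis by auto
    next
      case False
      then have E: "{z. 0 < z \<and> e < \<sigma> z \<omega>} = {}" by auto
      show ?thesis unfolding E using False by auto
    qed
    then show ?thesis by auto
  qed
  also have "\<dots> \<in> sets M" by measurable
  finally show "(\<lambda>\<omega>. Inf {z. 0 < z \<and> e < \<sigma> z \<omega>}) -` {k} \<inter> space M \<in> sets M" .
qed auto

lemma Z2f_meas: "(\<lambda>\<omega>. Sup {z. z \<le> 0 \<and> e < \<sigma> z \<omega>}) \<in> measurable M (count_space UNIV)"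
proof (subst measurable_count_space_eq2_countable, intro conjI ballI)
  fix k :: int
  have "(\<lambda>\<omega>. Sup {z. z \<le> 0 \<and> e < \<sigma> z \<omega>}) -` {k} \<inter> space M =
    {\<omega>\<in>space M. (\<exists>z::int. z \<le> 0 \<and> e < \<sigma> z \<omega>) \<and> k \<le> 0 \<and> e < \<sigma> k \<omega> \<and> (\<forall>j\<in>{k<..0}. \<not> e < \<sigma> j \<omega>)}
    \<union> {\<omega>\<in>space M. (\<forall>z::int. z \<le> 0 \<longrightarrow> \<not> e < \<sigma> z \<omega>) \<and> Sup ({}::int set) = k}"
  proof -
    have "Sup {z. z \<le> 0 \<and> e < \<sigma> z \<omega>} = k \<longleftrightarrow>
       ((\<exists>z::int. z \<le> 0 \<and> e < \<sigma> z \<omega>) \<and> k \<le> 0 \<and> e < \<sigma> k \<omega> \<and> (\<forall>j\<in>{k<..0}. \<not> e < \<sigma> j \<omega>))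
      \<or> ((\<forall>z::int. z \<le> 0 \<longrightarrow> \<not> e < \<sigma> z \<omega>) \<and> Sup ({}::int set) = k)" for \<omega>
    proof (cases "\<exists>z::int. z \<le> 0 \<and> e < \<sigma> z \<omega>")
      case True
      then have "{z. z \<le> 0 \<and> e < \<sigma> z \<omega>} \<subseteq> {..0}" "{z. z \<le> 0 \<and> e < \<sigma> z \<omega>} \<noteq> {}" by auto
      from int_Sup_nonpos[OF this, of k] True show ?thesis by auto
    next
      case False
      then have E: "{z. z \<le> 0 \<and> e < \<sigma> z \<omega>} = {}" by auto
      show ?thesis unfolding E using False by auto
    qed
    then show ?thesis by auto
  qed
  also have "\<dots> \<in> sets M" by measurable
  finally show "(\<lambda>\<omega>. Sup {z. z \<le> 0 \<and> e < \<sigma> z \<omega>}) -` {k} \<inter> space M \<in> sets M" .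
qed auto

lemma Wsum_meas:
  assumes "Zf \<in> measurable M (count_space UNIV)"
  shows "(\<lambda>\<omega>. \<Sum>z\<in>W n (Zf \<omega>). \<sigma> z \<omega>) \<in> borel_measurable M"
  using measurable_compose_countable[where f="\<lambda>k \<omega>. \<Sum>z\<in>W n k. \<sigma> z \<omega>" and g=Zf, OF _ assms]
  by simp

end


lemma halving:
  fixes L :: "real \<Rightarrow> real"
  assumes lim: "((\<lambda>u. L (u * (1/2)) / L u) \<longlongrightarrow> 1) at_top" and nn: "\<And>x. 0 \<le> L x"
  shows "\<exists>y0>0. \<forall>y\<ge>y0. 0 < L y \<and> 3/4 * L y \<le> L (y/2)"
proof -
  have "eventually (\<lambda>u. 3/4 < L (u * (1/2)) / L u) at_top"
    by (rule order_tendstoD(1)[OF lim]) simp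
  then obtain y1 where y1: "\<And>u. u \<ge> y1 \<Longrightarrow> 3/4 < L (u * (1/2)) / L u"
    unfolding eventually_at_top_linorder by blast
  define y0 where "y0 = max y1 1"
  have "\<forall>y\<ge>y0. 0 < L y \<and> 3/4 * L y \<le> L (y/2)"
  proof (intro allI impI)
    fix y assume y: "y \<ge> y0"
    then have r: "3/4 < L (y/2) / L y" using y1[of y] unfolding y0_def by simp
    then have "L y \<noteq> 0" by auto
    then have pos: "0 < L y" using nn[of y] by simp
    then show "0 < L y \<and> 3/4 * L y \<le> L (y/2)" using r by (simp add: pos_less_divide_eq)
  qed
  then show ?thesis unfolding y0_def by (intro exI[of _ "max y1 1"]) auto
qed

lemma dyadic:
  fixes L :: "real \<Rightarrow> real"
  assumes hv: "\<forall>y\<ge>y0. 0 < L y \<and> 3/4 * L y \<le> L (y/2)" and a0: "0 \<le> a"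
  shows "y0 \<le> a/2^j \<Longrightarrow> (3/4)^(Suc j) * L a \<le> L (a/2^(Suc j))"
proof (induction j)
  case 0
  then show ?case using hv by auto
next
  case (Suc j)
  have "a/2^(Suc j) \<le> a/2^j" using a0 by (simp add: divide_left_mono)
  then have h1: "y0 \<le> a/2^j" using Suc.prems by linarith
  have "(3/4)^(Suc (Suc j)) * L a = 3/4 * ((3/4)^(Suc j) * L a)" by (metis power_Suc mult.assoc)
  also have "\<dots> \<le> 3/4 * L (a/2^(Suc j))" by (rule mult_left_mono) (use Suc.IH[OF h1] in auto)
  also have "\<dots> \<le> L (a/2^(Suc j)/2)" using hv Suc.prems by auto
  also have "a/2^(Suc j)/2 = a/2^(Suc (Suc j))" by simp
  finally show ?case .
qed

lemma dyadic_sum: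
  fixes L :: "real \<Rightarrow> real"
  assumes hv: "\<forall>y\<ge>y0. 0 < L y \<and> 3/4 * L y \<le> L (y/2)" and a0: "0 < a" and y0: "0 < y0"
    and nn: "\<And>x. 0 \<le> L x"
  shows "(\<Sum>j<N. wt a y0 j * (1 / L (a/2^(Suc j)))) \<le> 4 * a / L a"
proof (cases "y0 \<le> a")
  case False
  have "wt a y0 j = 0" for j
  proof -
    have "a/2^j \<le> a" using a0 by (simp add: divide_le_eq)
    then show ?thesis using False unfolding wt_def by auto
  qed
  moreover have "0 \<le> 4 * a / L a" using nn[of a] a0 by simp
  ultimately show ?thesis by simp
next
  case True
  have La: "0 < L a" using hv True by auto
  have "(\<Sum>j<N. wt a y0 j * (1 / L (a/2^(Suc j)))) \<le> (\<Sum>j<N. (4/3) * (a / L a) * (2/3)^j)"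
  proof (intro sum_mono)
    fix j assume "j \<in> {..<N}"
    show "wt a y0 j * (1 / L (a/2^(Suc j))) \<le> (4/3) * (a / L a) * (2/3)^j"
    proof (cases "y0 \<le> a/2^j")
      case False then show ?thesis unfolding wt_def using a0 La by simp
    next
      case True
      have d: "(3/4)^(Suc j) * L a \<le> L (a/2^(Suc j))" by (rule dyadic[OF hv _ True]) (use a0 in simp)
      have pos: "0 < (3/4::real)^(Suc j) * L a" using La by simp
      have Lb: "0 < L (a/2^(Suc j))" using d pos by linarith
      have "wt a y0 j * (1 / L (a/2^(Suc j))) = (a/2^j) / L (a/2^(Suc j))" using True unfolding wt_def by simp
      also have "\<dots> \<le> (a/2^j) / ((3/4)^(Suc j) * L a)"
        using d pos a0 Lb by (intro divide_left_mono) (auto intro: mult_pos_pos)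
      also have "\<dots> = (4/3) * (a / L a) * (2/3)^j"
        using La Lb by (simp add: field_simps power_divide flip: power_mult_distrib)
      finally show ?thesis .
    qed
  qed
  also have "\<dots> = (4/3) * (a / L a) * (\<Sum>j<N. (2/3)^j)" by (simp add: sum_distrib_left)
  also have "(\<Sum>j<N. (2/3::real)^j) \<le> 3"
  proof -
    have "(\<Sum>j<N. (2/3::real)^j) = (1 - (2/3)^N) / (1 - 2/3)" by (subst geometric_sum) auto
    also have "\<dots> \<le> 3" by simp
    finally show ?thesis .
  qed
  then have "(4/3) * (a / L a) * (\<Sum>j<N. (2/3::real)^j) \<le> (4/3) * (a / L a) * 3"
    using La a0 by (intro mult_left_mono) auto
  finally show ?thesis by simp
qed

lemma sqrt_bound:
  fixes L :: "real \<Rightarrow> real"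
  assumes hv: "\<forall>y\<ge>y0. 0 < L y \<and> 3/4 * L y \<le> L (y/2)" and y0: "0 < y0"
    and mono: "\<And>x y. x \<le> y \<Longrightarrow> 0 < L y \<Longrightarrow> L x \<le> L y"
  shows "\<forall>x>y0. (L x)^2 \<le> (L (2*y0))^2 / y0 * x"
proof -
  define C where "C = (L (2*y0))^2 / y0"
  have L2: "0 < L (2*y0)" using hv y0 by auto
  have Q: "\<forall>x. y0 < x \<and> x \<le> y0 * 2^m \<longrightarrow> (L x)^2 \<le> C * x" for m :: nat
  proof (induction m)
    case 0 then show ?case by auto
  next
    case (Suc m)
    show ?case
    proof (intro allI impI)
      fix x assume x: "y0 < x \<and> x \<le> y0 * 2^(Suc m)"
      show "(L x)^2 \<le> C * x"
      proof (cases "x \<le> 2*y0")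
        case True
        have "0 \<le> L x" using mono[of 0 x] hv x by (metis less_eq_real_def order_trans y0 hv)
        then have "(L x)^2 \<le> (L (2*y0))^2" using mono[OF True L2] by (intro power_mono) auto
        also have "\<dots> = C * y0" unfolding C_def using y0 by simp
        also have "\<dots> \<le> C * x" using x y0 unfolding C_def by (intro mult_left_mono) auto
        finally show ?thesis .
      next
        case False
        have xx: "y0 < x/2 \<and> x/2 \<le> y0 * 2^m" using False x by auto
        have IH: "(L (x/2))^2 \<le> C * (x/2)" using Suc.IH xx by blast
        have hx: "0 < L x \<and> 3/4 * L x \<le> L (x/2)" using hv x by auto
        have "(3/4 * L x)^2 \<le> (L (x/2))^2" using hx by (intro power_mono) auto
        then have "9/16 * (L x)^2 \<le> C * (x/2)" using IH by (simp add: power2_eq_square)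
        moreover have "0 \<le> C * x" unfolding C_def using x y0 by simp
        ultimately show ?thesis by linarith
      qed
    qed
  qed
  show ?thesis
  proof (intro allI impI)
    fix x assume x: "x > y0"
    obtain m where "x / y0 < 2^m" using real_arch_pow[of 2 "x/y0"] by auto
    then have "x \<le> y0 * 2^m" using y0 by (simp add: divide_less_eq mult.commute)
    then show "(L x)^2 \<le> (L (2*y0))^2 / y0 * x" using Q[of m] x unfolding C_def by blast
  qed
qed



lemma arith1:
  fixes h r Q p :: real
  assumes h: "h \<ge> 2" and r: "r \<ge> h" and Q: "Q \<ge> 1/2" and p: "0 \<le> p" "p \<le> 2/r"
  shows "(2*(r/h)+3)*p/Q \<le> 20/h"
proof -
  have hp: "h > 0" "r > 0" using h r by auto
  define X where "X = 2*(r/h)+3"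
  have X: "0 \<le> X" unfolding X_def using hp by simp
  have "X*p/Q \<le> X*p*2"
  proof -
    have "X*p/Q \<le> X*p/(1/2)" using X p Q by (intro divide_left_mono) auto
    then show ?thesis by simp
  qed
  also have "\<dots> \<le> X*(2/r)*2" using mult_left_mono[OF p(2) X] by simp
  also have "\<dots> = 8/h + 12/r" unfolding X_def using hp by (simp add: field_simps)
  also have "12/r \<le> 12/h" using hp r by (simp add: frac_le)
  finally show ?thesis unfolding X_def by simp
qed

lemma arith2:
  fixes h r Q S e c' :: real
  assumes h: "h \<ge> 2" and r: "r \<ge> h" and e: "e > 0" and Q: "Q \<ge> 1/2" and S: "0 \<le> S" "S \<le> 8*(e/h^3)/r"
    and c': "c' \<ge> e/(4*h)"
  shows "(2*(r/h)+3)*S/(Q*c') \<le> 320/h"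
proof -
  have hp: "h > 0" "r > 0" using h r by auto
  define X where "X = 2*(r/h)+3"
  have X: "0 \<le> X" unfolding X_def using hp by simp
  have Qc: "e/(8*h) \<le> Q*c'"
  proof -
    have "e/(8*h) = (1/2)*(e/(4*h))" by simp
    also have "\<dots> \<le> Q*c'" using Q c' e hp by (intro mult_mono) auto
    finally show ?thesis .
  qed
  have pos: "0 < e/(8*h)" using e hp by simp
  have "X*S/(Q*c') \<le> X*S/(e/(8*h))"
  proof (rule divide_left_mono[OF Qc])
    show "0 \<le> X*S" using X S by simp
    have "0 < Q*c'" using pos Qc by linarith
    then show "0 < Q * c' * (e / (8 * h))" using pos by (rule mult_pos_pos)
  qed
  also have "\<dots> \<le> X*(8*(e/h^3)/r)/(e/(8*h))"
    using X S pos by (intro divide_right_mono mult_left_mono) auto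
  also have "\<dots> = 128/h^3 + 192/(h^2*r)" unfolding X_def using hp e by (simp add: field_simps power2_eq_square power3_eq_cube)
  also have "128/h^3 \<le> 128/h"
  proof -
    have "1 \<le> h^2" using h by (intro one_le_power) auto
    then have "h * 1 \<le> h * h^2" using hp by (intro mult_left_mono) auto
    then have "h \<le> h^3" by (simp add: power2_eq_square power3_eq_cube)
    then show ?thesis using hp by (simp add: frac_le)
  qed
  also have "192/(h^2*r) \<le> 192/h"
  proof -
    have "1 \<le> h^2" using h by (intro one_le_power) auto
    then have "1 * r \<le> h^2 * r" using hp by (intro mult_right_mono) auto
    then have "h \<le> h^2*r" using r by simp
    then show ?thesis using hp by (simp add: frac_le)
  qed
  finally show ?thesis unfolding X_def by simp
qed



lemma arith3:
  fixes hh r y0 C e :: real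
  assumes hh: "hh \<ge> 1" and r: "r \<ge> hh" and y0: "y0 > 0" and C: "C > 0" and rC: "r \<ge> 20*y0*C"
    and re: "r^2 \<le> C*e"
  shows "(2*(r/hh)+3)*y0 \<le> e/(4*hh)"
proof -
  have hp: "hh > 0" "r > 0" using hh r by auto
  have "(2*(r/hh)+3)*y0*(4*hh) = 8*r*y0 + 12*hh*y0" using hp by (simp add: field_simps)
  also have "\<dots> \<le> 20*r*y0" using r y0 by (simp add: mult_right_mono)
  also have "20*r*y0 \<le> r*r/C"
  proof -
    have "20*y0*C*r \<le> r*r" using rC hp by (intro mult_right_mono) auto
    then show ?thesis using C by (simp add: le_divide_eq mult_ac)
  qed
  also have "r*r/C \<le> e" using re C by (simp add: divide_le_eq power2_eq_square mult_ac)
  finally have "(2*(r/hh)+3)*y0*(4*hh) \<le> e" .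
  then show ?thesis using hp by (simp add: le_divide_eq)
qed

theorem proposition3p11:
  fixes M :: "'a measure" and \<sigma> :: "int \<Rightarrow> 'a \<Rightarrow> real" and h :: "real \<Rightarrow> real"
  assumes "prob_space M"
    and "\<And>z. \<sigma> z \<in> borel_measurable M"
    and "prob_space.indep_vars M (\<lambda>_. borel) \<sigma> UNIV"
    and "\<And>z. distr M borel (\<sigma> z) = distr M borel (\<sigma> 0)"
    and "\<And>z. AE \<omega> in M. \<sigma> z \<omega> > 0"
    and "\<And>v. v > 0 \<Longrightarrow> ((\<lambda>u. tailL M \<sigma> (u * v) / tailL M \<sigma> u) \<longlongrightarrow> 1) at_top"
    and "filterlim h at_top at_top"
    and "(\<lambda>t. (h t)\<^sup>2) \<in> o(\<lambda>t. rt M \<sigma> t)"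
    and "eventually (\<lambda>t. tailL M \<sigma> (ellt M \<sigma> t / (h t)^3) > tailL M \<sigma> (ellt M \<sigma> t) * (1 - 1 / h t)
                       \<and> tailL M \<sigma> (ellt M \<sigma> t * (h t)^3) < tailL M \<sigma> (ellt M \<sigma> t) * (1 + 1 / h t)) at_top"
  shows "((\<lambda>t. measure M {\<omega> \<in> space M. Sbar M \<sigma> h t \<omega> < ellt M \<sigma> t / h t}) \<longlongrightarrow> 1) at_top"
proof -
  interpret iidsetup M \<sigma>
    by (intro iidsetup.intro iidsetup_axioms.intro) (use assms(1-4) in auto)
  define L where "L = tailL M \<sigma>"
  have Lnn: "\<And>x. 0 \<le> L x" unfolding L_def tailL_def by simp
  have P0gt: "\<And>x. P0 {x<..} = 1 / L x" unfolding L_def tailL_def P0_def by simp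
  have P0le: "\<And>x. P0 {..x} = 1 - P0 {x<..}"
  proof -
    fix x
    have "{\<omega>\<in>space M. \<sigma> 0 \<omega> \<in> {..x}} = space M - {\<omega>\<in>space M. \<sigma> 0 \<omega> \<in> {x<..}}" by auto
    then show "P0 {..x} = 1 - P0 {x<..}" unfolding P0_def by (simp add: prob_compl sev)
  qed
  have Lmono: "\<And>x y. x \<le> y \<Longrightarrow> 0 < L y \<Longrightarrow> L x \<le> L y"
  proof -
    fix x y :: real assume xy: "x \<le> y" and Ly: "0 < L y"
    have "P0 {y<..} \<le> P0 {x<..}" using xy by (intro P0_mono) auto
    then have le: "1 / L y \<le> 1 / L x" by (simp add: P0gt)
    have p: "0 < 1 / L y" using Ly by simp
    then have "0 < 1 / L x" using le by linarith
    then have Lx: "0 < L x" using Lnn[of x] by (cases "L x = 0") auto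
    show "L x \<le> L y" using le Lx Ly by (simp add: divide_le_eq_1 frac_le field_simps)
  qed
  have hlim: "((\<lambda>u. L (u * (1/2)) / L u) \<longlongrightarrow> 1) at_top" using assms(6)[of "1/2"] unfolding L_def by simp
  obtain y0 where y0: "y0 > 0" and hv: "\<forall>y\<ge>y0. 0 < L y \<and> 3/4 * L y \<le> L (y/2)"
    using halving[OF hlim Lnn] by blast
  define C where "C = (L (2*y0))^2 / y0"
  have "0 < L (2*y0)" using hv y0 by auto
  then have Cpos: "C > 0" unfolding C_def using y0 by simp
  have sq: "\<forall>x>y0. (L x)^2 \<le> C * x" unfolding C_def by (rule sqrt_bound[OF hv y0 Lmono])
  have Ly0: "0 < L y0" using hv by auto
  define Hc where "Hc = max 2 (max (L y0 + 1) (20*y0*C))"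
  have ev1: "eventually (\<lambda>t. Hc \<le> h t) at_top" using assms(7) unfolding filterlim_at_top by blast
  have ev2: "eventually (\<lambda>t. norm ((h t)^2) \<le> 1 * norm (rt M \<sigma> t)) at_top"
    by (rule landau_o.smallD[OF assms(8)]) simp
  have main: "eventually (\<lambda>t. 1 - 680 / h t \<le> measure M {\<omega> \<in> space M. Sbar M \<sigma> h t \<omega> < ellt M \<sigma> t / h t}) at_top"
    using ev1 ev2 assms(9)
  proof eventually_elim
    case (elim t)
    define e where "e = ellt M \<sigma> t"
    define r where "r = rt M \<sigma> t"
    define hh where "hh = h t"
    define a where "a = e / hh^3"
    define n where "n = r / hh"
    have rL: "r = L e" unfolding r_def e_def rt_def L_def by simp
    have hh2: "hh \<ge> 2" "hh \<ge> L y0 + 1" "hh \<ge> 20*y0*C" using elim(1) unfolding hh_def Hc_def by auto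
    have r0: "0 \<le> r" unfolding rL using Lnn by simp
    have hr: "hh^2 \<le> r" using elim(2) r0 unfolding hh_def r_def by simp
    have La: "L a > r * (1 - 1/hh)" using elim(3) unfolding a_def hh_def r_def e_def L_def rt_def by simp
    have hhr: "hh \<le> r"
    proof -
      have "hh * 1 \<le> hh * hh" using hh2 by (intro mult_left_mono) auto
      then show ?thesis using hr by (simp add: power2_eq_square)
    qed
    have hp: "hh > 0" "r > 0" "r \<ge> 2" using hh2 hhr by auto
    have ey0: "e > y0"
    proof (rule ccontr)
      assume "\<not> e > y0"
      then have "L e \<le> L y0" using Lmono Ly0 by simp
      then show False using hhr hh2 rL by simp
    qed
    have e0: "e > 0" using ey0 y0 by simp
    have re: "r^2 \<le> C * e" using sq ey0 rL by simp
    have a0: "a > 0" unfolding a_def using e0 hp by simp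
    obtain N where N: "a / y0 < 2^N" using real_arch_pow[of 2 "a/y0"] by auto
    then have aN: "a / 2^N < y0" using y0 by (simp add: divide_less_eq mult.commute)
    have n0: "0 \<le> n" unfolding n_def using hp by simp
    define c where "c = e / (2*hh)"
    have cy: "(2*n+3)*y0 \<le> e/(4*hh)" unfolding n_def
      by (rule arith3) (use hh2 hhr y0 Cpos re in auto)
    have c': "c - (2*n+3)*y0 \<ge> e/(4*hh)" using cy unfolding c_def by (simp add: field_simps)
    have c'pos: "0 < c - (2*n+3)*y0" using c' e0 hp by (smt (verit) divide_pos_pos)
    have Qe: "P0 {..e} = 1 - 1/r" using P0le P0gt rL by simp
    have ir: "0 < 1/r" "1/r \<le> 1/2" using hp by (auto intro: frac_le)
    have Q0: "0 < P0 {..e}" "P0 {..e} < 1" "P0 {..e} \<ge> 1/2" using Qe ir by linarith+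
    have Lapos: "L a \<ge> r/2"
    proof -
      have "r/2 \<le> r * (1 - 1/hh)" using hp hh2 by (simp add: field_simps)
      then show ?thesis using La by linarith
    qed
    have pa: "P0 {a<..} \<le> 2/r" "0 \<le> P0 {a<..}"
    proof -
      have "1 / L a \<le> 1 / (r/2)" using Lapos hp by (intro divide_left_mono) auto
      then show "P0 {a<..} \<le> 2/r" using P0gt by simp
    qed (rule P0_nonneg)
    define Ss where "Ss = (\<Sum>j<N. wt a y0 j * P0 {a/2^(Suc j)<..})"
    have Ss: "0 \<le> Ss" "Ss \<le> 8*(e/hh^3)/r"
    proof -
      show "0 \<le> Ss" unfolding Ss_def by (intro sum_nonneg mult_nonneg_nonneg wt_nonneg[OF y0] P0_nonneg)
      have "Ss \<le> 4 * a / L a" unfolding Ss_def P0gt by (rule dyadic_sum[OF hv a0 y0 Lnn])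
      also have "\<dots> \<le> 4 * a / (r/2)" using Lapos hp a0 by (intro divide_left_mono) auto
      also have "\<dots> = 8*(e/hh^3)/r" unfolding a_def by simp
      finally show "Ss \<le> 8*(e/hh^3)/r" .
    qed
    have T1: "(2*n+3) * P0 {a<..} / P0 {..e} \<le> 20/hh" unfolding n_def
      by (rule arith1) (use hh2 hhr Q0 pa in auto)
    have T2: "(2*n+3) * Ss / (P0 {..e} * (c - (2*n+3)*y0)) \<le> 320/hh" unfolding n_def
      by (rule arith2) (use hh2 hhr e0 Q0 Ss c' in \<open>auto simp: n_def\<close>)
    have B1: "prob {\<omega>\<in>space M. c \<le> (\<Sum>z\<in>W n (Inf {z. 0 < z \<and> e < \<sigma> z \<omega>}). \<sigma> z \<omega>)} \<le> 340/hh"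
      using Z1_bound[OF Q0(1,2) n0 a0 y0 aN c'pos] T1 T2 unfolding Ss_def by simp
    have B2: "prob {\<omega>\<in>space M. c \<le> (\<Sum>z\<in>W n (Sup {z. z \<le> 0 \<and> e < \<sigma> z \<omega>}). \<sigma> z \<omega>)} \<le> 340/hh"
      using Z2_bound[OF Q0(1,2) n0 a0 y0 aN c'pos] T1 T2 unfolding Ss_def by simp
    define S1 where "S1 = (\<lambda>\<omega>. \<Sum>z\<in>W n (Inf {z. 0 < z \<and> e < \<sigma> z \<omega>}). \<sigma> z \<omega>)"
    define S2 where "S2 = (\<lambda>\<omega>. \<Sum>z\<in>W n (Sup {z. z \<le> 0 \<and> e < \<sigma> z \<omega>}). \<sigma> z \<omega>)"
    have Sb: "\<And>\<omega>. Sbar M \<sigma> h t \<omega> = S1 \<omega> + S2 \<omega>"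
      unfolding Sbar_def S1_def S2_def Z1_def Z2_def W_def n_def r_def hh_def e_def by simp
    have S1m: "S1 \<in> borel_measurable M" unfolding S1_def by (rule Wsum_meas[OF Z1f_meas])
    have S2m: "S2 \<in> borel_measurable M" unfolding S2_def by (rule Wsum_meas[OF Z2f_meas])
    define A where "A = {\<omega> \<in> space M. Sbar M \<sigma> h t \<omega> < e / hh}"
    have Aev: "A \<in> events" unfolding A_def Sb using S1m S2m by measurable
    have "space M - A \<subseteq> {\<omega>\<in>space M. c \<le> S1 \<omega>} \<union> {\<omega>\<in>space M. c \<le> S2 \<omega>}"
      unfolding A_def Sb c_def by (auto simp: field_simps)
    moreover have E1: "{\<omega>\<in>space M. c \<le> S1 \<omega>} \<in> events" using S1m by measurable
    moreover have E2: "{\<omega>\<in>space M. c \<le> S2 \<omega>} \<in> events" using S2m by measurable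
    ultimately have "prob (space M - A) \<le> prob ({\<omega>\<in>space M. c \<le> S1 \<omega>} \<union> {\<omega>\<in>space M. c \<le> S2 \<omega>})"
      by (intro finite_measure_mono) auto
    also have "\<dots> \<le> prob {\<omega>\<in>space M. c \<le> S1 \<omega>} + prob {\<omega>\<in>space M. c \<le> S2 \<omega>}"
      using E1 E2 by (rule measure_Un_le)
    also have "\<dots> \<le> 340/hh + 340/hh" using B1 B2 unfolding S1_def S2_def by simp
    finally have "prob (space M - A) \<le> 680/hh" by simp
    then have "1 - 680/hh \<le> prob A" using prob_compl[OF Aev] by simp
    then show ?case unfolding A_def hh_def e_def by simp
  qed
  have lim1: "((\<lambda>t. 1 - 680 / h t) \<longlongrightarrow> 1) at_top"
  proof -
    have "((\<lambda>t. 1 - 680 * inverse (h t)) \<longlongrightarrow> 1 - 680 * 0) at_top"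
      by (intro tendsto_intros tendsto_inverse_0_at_top assms(7))
    then show ?thesis by (simp add: divide_inverse)
  qed
  show ?thesis
    by (rule tendsto_sandwich[OF main _ lim1 tendsto_const]) simp
qed


end
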